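(* Let $X=L^\infty(\mathcal P)$ and assume that the family of all nonconstant rectifiable curves in $\mathcal P$ has zero $L^\infty$-modulus. Then $N^{1,\infty}(\mathcal P)=L^\infty(\mathcal P)$ and: (I) for every $E\subset\mathcal P$, $C_\infty(E)=0$ if $\mu(E)=0$ and $C_\infty(E)=1$ if $\mu(E)>0$; (II) if $A\subset\mathcal P$ is nonempty with $\mu(A)=0$, then $\chi_A\in N^{1,\infty}(\mathcal P)$ is weakly quasicontinuous but not quasicontinuous (so not every weakly quasicontinuous function is quasicontinuous); (III) if there is a closed set $F\subset\mathcal P$ with empty interior and $\mu(F)>0$, then $\chi_F\in N^{1,\infty}(\mathcal P)$ is not weakly quasicontinuous. Moreover, each of the following statements is equivalent to $\mu(\{x\})>0$ for every $x\in\mathcal P$: $C_\infty$ is an outer capacity; $C_\infty$ is a quasiouter capacity; every weakly quasicontinuous $u:\mathcal P\to[-\infty,\infty]$ is quasicontinuous; $C_\infty$ is an outer capacity for sets of zero capacity; $C_\infty(E)>0$ for every nonempty $E\subset\mathcal P$.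
   Context: Standing assumptions: $\mathcal P=(\mathcal P,d,\mu)$ is a metric space with a positive complete Borel measure $\mu$ such that $0<\mu(B)<\infty$ for every ball $B$; $\mu$ is extended as an outer measure to all subsets. $L^\infty(\mathcal P)$ is regarded as a space of everywhere-defined measurable functions with the (semi)norm $\|\cdot\|_{L^\infty}$. A family $\Gamma$ of curves has zero $L^\infty$-modulus if there is a Borel $\rho\in L^\infty(\mathcal P)$ with $\int_\gamma\rho\,ds=\infty$ for every $\gamma\in\Gamma$. A Borel $g:\mathcal P\to[0,\infty]$ is an upper gradient of $u:\mathcal P\to[-\infty,\infty]$ if $|u(\gamma(0))-u(\gamma(l_\gamma))|\le\int_\gamma g\,ds$ for every nonconstant rectifiable (arc-length parametrized) curve $\gamma:[0,l_\gamma]\to\mathcal P$. $N^{1,\infty}(\mathcal P)=\{u\in L^\infty:\|u\|_{N^{1,\infty}}:=\|u\|_{L^\infty}+\inf_g\|g\|_{L^\infty}<\infty\}$. $C_\infty(E)=\inf\{\|u\|_{N^{1,\infty}}:u\in N^{1,\infty},\ u\ge1\text{ on }E\}$. $C_\infty$ is a $c$-quasiouter capacity if $\inf\{C_\infty(G):G\supset E\text{ open}\}\le cC_\infty(E)$ for all $E$; quasiouter if for some $c\ge1$; outer if $c=1$; outer for sets of zero capacity if whenever $C_\infty(E)=0$ and $\varepsilon>0$ there is an open $G\supset E$ with $C_\infty(G)<\varepsilon$. $u$ is weakly quasicontinuous if for every $\varepsilon>0$ there is $E$ with $C_\infty(E)<\varepsilon$ and $u|_{\mathcal P\setminus E}$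 (real-valued) continuous; quasicontinuous if $E$ can be chosen open. *)

theory Defs
  imports "HOL-Analysis.Analysis" "HOL-Probability.Probability"
begin

text \<open>Standing assumptions on the metric measure space (P, d, mu); P is the type 'a.\<close>
definition mms :: "('a::metric_space) measure \<Rightarrow> bool" where
  "mms M \<longleftrightarrow> space M = UNIV \<and> sets borel \<subseteq> sets M \<and> complete_measure M \<and>
     (\<forall>x r. r > 0 \<longrightarrow> 0 < emeasure M (ball x r) \<and> emeasure M (ball x r) < \<infinity>)"

definition curve_length :: "(real \<Rightarrow> 'a::metric_space) \<Rightarrow> real \<Rightarrow> real \<Rightarrow> ereal" where
  "curve_length \<gamma> a b = Sup {ereal (\<Sum>i<n. dist (\<gamma> (p i)) (\<gamma> (p (Suc i)))) | n p.
       p 0 = a \<and> p n = b \<and> (\<forall>i<n. p i \<le> p (Suc i))}"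

definition arclength_curve :: "(real \<Rightarrow> 'a::metric_space) \<Rightarrow> real \<Rightarrow> bool" where
  "arclength_curve \<gamma> l \<longleftrightarrow> 0 < l \<and>
     (\<forall>s t. 0 \<le> s \<longrightarrow> s \<le> t \<longrightarrow> t \<le> l \<longrightarrow> curve_length \<gamma> s t = ereal (t - s))"

definition line_int :: "('a \<Rightarrow> ereal) \<Rightarrow> (real \<Rightarrow> 'a) \<Rightarrow> real \<Rightarrow> ereal" where
  "line_int g \<gamma> l = enn2ereal (\<integral>\<^sup>+ t. e2ennreal (g (\<gamma> t)) * indicator {0..l} t \<partial>lborel)"

definition linf_norm :: "'a measure \<Rightarrow> ('a \<Rightarrow> ereal) \<Rightarrow> ereal" where
  "linf_norm M u = esssup M (\<lambda>x. \<bar>u x\<bar>)"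

definition Linf :: "'a measure \<Rightarrow> ('a \<Rightarrow> ereal) set" where
  "Linf M = {u. u \<in> borel_measurable M \<and> linf_norm M u < \<infinity>}"

text \<open>Upper gradient inequality, with the convention that the left-hand side is infinite
  whenever one of the two values is infinite.\<close>
definition ug_ineq :: "ereal \<Rightarrow> ereal \<Rightarrow> ereal \<Rightarrow> bool" where
  "ug_ineq a b I \<longleftrightarrow> (if \<bar>a\<bar> = \<infinity> \<or> \<bar>b\<bar> = \<infinity> then I = \<infinity> else \<bar>a - b\<bar> \<le> I)"

definition upper_gradient :: "('a::metric_space \<Rightarrow> ereal) \<Rightarrow> ('a \<Rightarrow> ereal) \<Rightarrow> bool" where
  "upper_gradient u g \<longleftrightarrow> g \<in> borel_measurable borel \<and> (\<forall>x. 0 \<le> g x) \<and>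
     (\<forall>\<gamma> l. arclength_curve \<gamma> l \<longrightarrow> ug_ineq (u (\<gamma> 0)) (u (\<gamma> l)) (line_int g \<gamma> l))"

definition n1inf_norm :: "('a::metric_space) measure \<Rightarrow> ('a \<Rightarrow> ereal) \<Rightarrow> ereal" where
  "n1inf_norm M u = linf_norm M u + (INF g \<in> {g. upper_gradient u g}. linf_norm M g)"

definition N1inf :: "('a::metric_space) measure \<Rightarrow> ('a \<Rightarrow> ereal) set" where
  "N1inf M = {u. u \<in> Linf M \<and> n1inf_norm M u < \<infinity>}"

definition Cinf :: "('a::metric_space) measure \<Rightarrow> 'a set \<Rightarrow> ereal" where
  "Cinf M E = (INF u \<in> {u \<in> N1inf M. \<forall>x\<in>E. 1 \<le> u x}. n1inf_norm M u)"

text \<open>The family of all nonconstant rectifiable curves has zero L^infinity-modulus.\<close>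
definition all_curves_zero_modulus :: "('a::metric_space) measure \<Rightarrow> bool" where
  "all_curves_zero_modulus M \<longleftrightarrow> (\<exists>\<rho>. \<rho> \<in> borel_measurable borel \<and> (\<forall>x. 0 \<le> \<rho> x) \<and>
      \<rho> \<in> Linf M \<and> (\<forall>\<gamma> l. arclength_curve \<gamma> l \<longrightarrow> line_int \<rho> \<gamma> l = \<infinity>))"

definition quasiouter_c :: "('a::metric_space) measure \<Rightarrow> ereal \<Rightarrow> bool" where
  "quasiouter_c M c \<longleftrightarrow>
     (\<forall>E. (INF G \<in> {G. open G \<and> E \<subseteq> G}. Cinf M G) \<le> c * Cinf M E)"

definition quasiouter :: "('a::metric_space) measure \<Rightarrow> bool" where
  "quasiouter M \<longleftrightarrow> (\<exists>c::real. c \<ge> 1 \<and> quasiouter_c M (ereal c))"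

definition outer_cap :: "('a::metric_space) measure \<Rightarrow> bool" where
  "outer_cap M \<longleftrightarrow> quasiouter_c M 1"

definition outer_zero_cap :: "('a::metric_space) measure \<Rightarrow> bool" where
  "outer_zero_cap M \<longleftrightarrow> (\<forall>E \<epsilon>. Cinf M E = 0 \<longrightarrow> \<epsilon> > 0 \<longrightarrow>
      (\<exists>G. open G \<and> E \<subseteq> G \<and> Cinf M G < ereal \<epsilon>))"

definition weakly_qc :: "('a::metric_space) measure \<Rightarrow> ('a \<Rightarrow> ereal) \<Rightarrow> bool" where
  "weakly_qc M u \<longleftrightarrow> (\<forall>\<epsilon>>0. \<exists>E. Cinf M E < ereal \<epsilon> \<and>
      (\<forall>x\<in>-E. \<bar>u x\<bar> \<noteq> \<infinity>) \<and> continuous_on (-E) (\<lambda>x. real_of_ereal (u x)))"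

definition quasicont :: "('a::metric_space) measure \<Rightarrow> ('a \<Rightarrow> ereal) \<Rightarrow> bool" where
  "quasicont M u \<longleftrightarrow> (\<forall>\<epsilon>>0. \<exists>E. open E \<and> Cinf M E < ereal \<epsilon> \<and>
      (\<forall>x\<in>-E. \<bar>u x\<bar> \<noteq> \<infinity>) \<and> continuous_on (-E) (\<lambda>x. real_of_ereal (u x)))"

end

theory Submission
  imports Defs
begin


lemma e2_mult: "0 < c \<Longrightarrow> e2ennreal (ereal c * y) = ennreal c * e2ennreal y"
  apply (cases y)
  apply (auto simp: ennreal_mult' e2ennreal_neg mult_nonpos_nonneg ennreal_mult_top)
  done

lemma nn_scale_ge:
  fixes f :: "'b \<Rightarrow> ennreal"
  shows "c * integral\<^sup>N N f \<le> (\<integral>\<^sup>+x. c * f x \<partial>N)"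
proof -
  have "c * integral\<^sup>N N f = (SUP g \<in> {g. simple_function N g \<and> g \<le> f}. c * integral\<^sup>S N g)"
    by (simp add: nn_integral_def SUP_mult_left_ennreal)
  also have "\<dots> \<le> (\<integral>\<^sup>+x. c * f x \<partial>N)"
  proof (rule SUP_least)
    fix g assume g: "g \<in> {g. simple_function N g \<and> g \<le> f}"
    then have "c * integral\<^sup>S N g = integral\<^sup>S N (\<lambda>x. c * g x)" by simp
    also have "\<dots> = (\<integral>\<^sup>+x. c * g x \<partial>N)"
      using g by (subst nn_integral_eq_simple_integral) auto
    also have "\<dots> \<le> (\<integral>\<^sup>+x. c * f x \<partial>N)"
      using g by (intro nn_integral_mono) (auto simp: le_fun_def intro: mult_left_mono)
    finally show "c * integral\<^sup>S N g \<le> (\<integral>\<^sup>+x. c * f x \<partial>N)" .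
  qed
  finally show ?thesis .
qed

lemma line_int_scale:
  assumes "0 < c" "line_int g \<gamma> l = \<infinity>"
  shows "line_int (\<lambda>x. ereal c * g x) \<gamma> l = \<infinity>"
proof -
  let ?h = "\<lambda>t. e2ennreal (g (\<gamma> t)) * indicator {0..l} t"
  have h: "integral\<^sup>N lborel ?h = top"
    using assms(2) unfolding line_int_def
    by (metis e2ennreal_enn2ereal e2ennreal_infty)
  have "ennreal c * integral\<^sup>N lborel ?h \<le> (\<integral>\<^sup>+t. ennreal c * ?h t \<partial>lborel)"
    by (rule nn_scale_ge)
  also have "\<dots> = (\<integral>\<^sup>+t. e2ennreal (ereal c * g (\<gamma> t)) * indicator {0..l} t \<partial>lborel)"
    using assms(1) by (simp add: e2_mult mult.assoc)
  finally have "(\<integral>\<^sup>+t. e2ennreal (ereal c * g (\<gamma> t)) * indicator {0..l} t \<partial>lborel) = top"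
    using h assms(1) by (simp add: ennreal_mult_top top_unique)
  then show ?thesis unfolding line_int_def by simp
qed

lemma mms_space: "mms M \<Longrightarrow> space M = UNIV" by (simp add: mms_def)
lemma mms_sets: "mms M \<Longrightarrow> sets borel \<subseteq> sets M" by (simp add: mms_def)
lemma mms_complete: "mms M \<Longrightarrow> complete_measure M" by (simp add: mms_def)


lemma mms_open: "mms M \<Longrightarrow> open G \<Longrightarrow> G \<in> sets M"
  by (rule subsetD[OF mms_sets borel_open])

lemma mms_closed: "mms M \<Longrightarrow> closed G \<Longrightarrow> G \<in> sets M"
  by (rule subsetD[OF mms_sets borel_closed])

lemma mms_open_pos: assumes "mms M" "open G" "x \<in> G" shows "0 < emeasure M G"
proof -
  obtain r where r: "r > 0" "ball x r \<subseteq> G" using assms(2,3) open_contains_ball_eq by metis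
  have "0 < emeasure M (ball x r)" using assms(1) r(1) by (simp add: mms_def)
  also have "\<dots> \<le> emeasure M G"
    by (rule emeasure_mono[OF r(2) mms_open[OF assms(1,2)]])
  finally show ?thesis .
qed

lemma mms_space_pos: "mms M \<Longrightarrow> emeasure M (space M) \<noteq> 0"
proof -
  assume m: "mms M"
  have "0 < emeasure M UNIV" by (rule mms_open_pos[OF m open_UNIV UNIV_I])
  then show ?thesis using mms_space[OF m] by simp
qed

lemma linf_nonneg: assumes "mms M" shows "0 \<le> linf_norm M u"
proof -
  have "esssup M (\<lambda>x. 0::ereal) \<le> esssup M (\<lambda>x. \<bar>u x\<bar>)"
    by (rule esssup_mono) simp_all
  then show ?thesis using esssup_const[OF mms_space_pos[OF assms], where c="0::ereal"]
    by (simp add: linf_norm_def)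
qed

lemma grad_inf_zero:
  fixes M :: "('a::metric_space) measure"
  assumes "mms M" "all_curves_zero_modulus M"
  shows "(INF g\<in>{g. upper_gradient u g}. linf_norm M g) = 0"
proof -
  obtain \<rho> where \<rho>: "\<rho> \<in> borel_measurable borel" "\<forall>x. 0 \<le> \<rho> x" "\<rho> \<in> Linf M"
     "\<forall>\<gamma> l. arclength_curve \<gamma> l \<longrightarrow> line_int \<rho> \<gamma> l = \<infinity>"
    using assms(2) unfolding all_curves_zero_modulus_def by blast
  have fin: "linf_norm M \<rho> < \<infinity>" using \<rho>(3) by (simp add: Linf_def)
  have nn: "0 \<le> linf_norm M \<rho>" by (rule linf_nonneg[OF assms(1)])
  obtain k where k: "linf_norm M \<rho> = ereal k" "0 \<le> k" using fin nn
    by (cases "linf_norm M \<rho>") auto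
  have ug: "upper_gradient u (\<lambda>x. ereal c * \<rho> x)" if c: "0 < c" for c
    unfolding upper_gradient_def
  proof (intro conjI allI impI)
    show "(\<lambda>x. ereal c * \<rho> x) \<in> borel_measurable borel" using \<rho>(1) by measurable
    fix x show "0 \<le> ereal c * \<rho> x" using \<rho>(2) c by simp
  next
    fix \<gamma> :: "real \<Rightarrow> 'a" and l assume "arclength_curve \<gamma> l"
    then have "line_int (\<lambda>x. ereal c * \<rho> x) \<gamma> l = \<infinity>"
      using \<rho>(4) c line_int_scale by blast
    then show "ug_ineq (u (\<gamma> 0)) (u (\<gamma> l)) (line_int (\<lambda>x. ereal c * \<rho> x) \<gamma> l)"
      by (simp add: ug_ineq_def)
  qed
  have nrm: "linf_norm M (\<lambda>x. ereal c * \<rho> x) = ereal c * linf_norm M \<rho>" if c: "0 < c" for c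
  proof -
    have "(\<lambda>x. \<bar>ereal c * \<rho> x\<bar>) = (\<lambda>x. ereal c * \<bar>\<rho> x\<bar>)"
      using \<rho>(2) c by (auto simp: abs_ereal_ge0)
    then show ?thesis unfolding linf_norm_def using esssup_cmult[OF c] by simp
  qed
  have key: "(INF g\<in>{g. upper_gradient u g}. linf_norm M g) \<le> 0 + ereal e" if e: "0 < e" for e
  proof -
    define c where "c = e / (k + 1)"
    have c: "0 < c" using e k by (simp add: c_def)
    have "c * k \<le> e" using e k by (simp add: c_def field_simps)
    have "(INF g\<in>{g. upper_gradient u g}. linf_norm M g) \<le> linf_norm M (\<lambda>x. ereal c * \<rho> x)"
      using ug[OF c] by (intro INF_lower) simp
    also have "\<dots> = ereal (c * k)" using nrm[OF c] k by simp
    also have "\<dots> \<le> 0 + ereal e" using \<open>c * k \<le> e\<close> by simp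
    finally show ?thesis .
  qed
  then have "(INF g\<in>{g. upper_gradient u g}. linf_norm M g) \<le> 0"
    by (rule ereal_le_epsilon2) (use key in simp)
  moreover have "0 \<le> (INF g\<in>{g. upper_gradient u g}. linf_norm M g)"
    by (intro INF_greatest linf_nonneg[OF assms(1)])
  ultimately show ?thesis by simp
qed



context
  fixes M :: "('a::metric_space) measure"
  assumes mms: "mms M" and acz: "all_curves_zero_modulus M"
begin

lemma n1_eq: "n1inf_norm M u = linf_norm M u"
  by (simp add: n1inf_norm_def grad_inf_zero[OF mms acz])

lemma N1_eq: "N1inf M = Linf M"
  by (auto simp: N1inf_def Linf_def n1_eq)

lemma Cinf_nonneg: "0 \<le> Cinf M E"
  unfolding Cinf_def by (intro INF_greatest) (simp add: n1_eq linf_nonneg[OF mms])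

lemma Cinf_le1: "Cinf M E \<le> 1"
proof -
  have m: "(\<lambda>x::'a. 1::ereal) \<in> borel_measurable M" by simp
  have n: "linf_norm M (\<lambda>x. 1) = 1"
    using esssup_const[OF mms_space_pos[OF mms], where c="1::ereal"] by (simp add: linf_norm_def)
  have "(\<lambda>x. 1) \<in> {u \<in> N1inf M. \<forall>x\<in>E. 1 \<le> u x}"
    using m n by (simp add: N1_eq Linf_def)
  then show ?thesis unfolding Cinf_def by (rule INF_lower2) (simp add: n1_eq n)
qed

lemma null_sub: assumes "outer_measure_of M E = 0" shows "E \<in> null_sets M"
proof -
  obtain B where B: "B \<in> sets M" "E \<subseteq> B" "outer_measure_of M E = emeasure M B"
    using outer_measure_of_attain[of E M] mms_space[OF mms] by auto
  then have "B \<in> null_sets M" using assms by auto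
  then show ?thesis using complete_measure.complete2[OF mms_complete[OF mms] B(2)] by simp
qed

lemma ind_Linf: assumes "S \<in> sets M" shows "(indicator S :: 'a \<Rightarrow> ereal) \<in> Linf M"
proof -
  have m: "(indicator S :: 'a \<Rightarrow> ereal) \<in> borel_measurable M" using assms by simp
  have ab: "(\<lambda>x. \<bar>indicator S x :: ereal\<bar>) = indicator S"
    by (auto simp: fun_eq_iff indicator_def)
  have m2: "(\<lambda>x. \<bar>indicator S x :: ereal\<bar>) \<in> borel_measurable M" unfolding ab by (rule m)
  have "linf_norm M (indicator S :: 'a \<Rightarrow> ereal) \<le> 1"
    unfolding linf_norm_def
  proof (rule esssup_I[OF m2])
    show "AE x in M. \<bar>indicator S x :: ereal\<bar> \<le> 1" by (rule AE_I2) (simp add: indicator_def)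
  qed
  then show ?thesis using m by (auto simp: Linf_def)
qed

lemma Cinf_null: assumes "outer_measure_of M E = 0" shows "Cinf M E = 0"
proof -
  have E: "E \<in> null_sets M" by (rule null_sub[OF assms])
  then have Es: "E \<in> sets M" by auto
  have m: "(indicator E :: 'a \<Rightarrow> ereal) \<in> borel_measurable M" using Es by simp
  have ab: "(\<lambda>x. \<bar>indicator E x :: ereal\<bar>) = indicator E"
    by (auto simp: fun_eq_iff indicator_def)
  have m2: "(\<lambda>x. \<bar>indicator E x :: ereal\<bar>) \<in> borel_measurable M" unfolding ab by (rule m)
  have "linf_norm M (indicator E :: 'a \<Rightarrow> ereal) \<le> 0"
    unfolding linf_norm_def
  proof (rule esssup_I[OF m2])
    show "AE x in M. \<bar>indicator E x :: ereal\<bar> \<le> 0"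
      using AE_not_in[OF E] by (rule eventually_mono) (simp add: indicator_def)
  qed
  then have "Cinf M E \<le> 0"
    unfolding Cinf_def using ind_Linf[OF Es]
    by (intro INF_lower2[of "indicator E"]) (auto simp: N1_eq n1_eq)
  then show ?thesis using Cinf_nonneg[of E] by simp
qed

lemma Cinf_pos: assumes "outer_measure_of M E > 0" shows "Cinf M E = 1"
proof -
  have "1 \<le> Cinf M E"
    unfolding Cinf_def
  proof (intro INF_greatest)
    fix u assume u: "u \<in> {u \<in> N1inf M. \<forall>x\<in>E. 1 \<le> u x}"
    then have m: "u \<in> borel_measurable M" by (simp add: N1_eq Linf_def)
    show "1 \<le> n1inf_norm M u"
    proof (rule ccontr)
      assume "\<not> 1 \<le> n1inf_norm M u"
      then have lt: "linf_norm M u < 1" by (simp add: n1_eq)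
      let ?S = "{x \<in> space M. \<bar>u x\<bar> > esssup M (\<lambda>x. \<bar>u x\<bar>)}"
      have S0: "emeasure M ?S = 0" by (rule esssup_zero_measure)
      note m[measurable]
      have Ss: "?S \<in> sets M" by measurable
      have "E \<subseteq> ?S"
      proof
        fix x assume "x \<in> E"
        then have "1 \<le> u x" using u by auto
        then have "1 \<le> \<bar>u x\<bar>" by (cases "u x") auto
        then show "x \<in> ?S" using lt mms_space[OF mms] by (auto simp: linf_norm_def)
      qed
      then have "outer_measure_of M E \<le> outer_measure_of M ?S" by (rule outer_measure_of_mono)
      also have "\<dots> = 0" using Ss S0 by simp
      finally show False using assms by simp
    qed
  qed
  then show ?thesis using Cinf_le1[of E] by simp
qed

lemma Cinf_lt1: assumes "Cinf M E < 1" shows "outer_measure_of M E = 0"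
proof (rule ccontr)
  assume "outer_measure_of M E \<noteq> 0"
  then have "outer_measure_of M E > 0" using not_gr_zero by blast
  then have "Cinf M E = 1" by (rule Cinf_pos)
  then show False using assms by simp
qed

lemma Cinf_open: assumes "open G" "G \<noteq> {}" shows "Cinf M G = 1"
proof -
  obtain x where x: "x \<in> G" using assms(2) by blast
  have "0 < emeasure M G" by (rule mms_open_pos[OF mms assms(1) x])
  then have "0 < outer_measure_of M G" using mms_open[OF mms assms(1)] by simp
  then show ?thesis by (rule Cinf_pos)
qed

lemma Cinf_empty: "Cinf M {} = 0"
  by (rule Cinf_null) simp

lemma lt1_open_empty: assumes "open G" "Cinf M G < 1" shows "G = {}"
proof (rule ccontr)
  assume "G \<noteq> {}"
  then have "Cinf M G = 1" by (rule Cinf_open[OF assms(1)])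
  then show False using assms(2) by simp
qed

lemma partII:
  assumes "A \<noteq> {}" "outer_measure_of M A = 0"
  shows "indicator A \<in> N1inf M \<and> weakly_qc M (indicator A) \<and> \<not> quasicont M (indicator A)"
proof (intro conjI)
  have An: "A \<in> null_sets M" by (rule null_sub[OF assms(2)])
  then have As: "A \<in> sets M" by auto
  show "indicator A \<in> N1inf M" using ind_Linf[OF As] by (simp add: N1_eq)
  show "weakly_qc M (indicator A)"
    unfolding weakly_qc_def
  proof (intro allI impI exI[of _ A] conjI)
    fix e :: real assume "0 < e"
    then show "Cinf M A < ereal e" using Cinf_null[OF assms(2)] by simp
    show "\<forall>x\<in>- A. \<bar>(indicator A x :: ereal)\<bar> \<noteq> \<infinity>" by simp
    have "continuous_on (- A) (\<lambda>x::'a. 0::real)" by simp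
    then show "continuous_on (- A) (\<lambda>x. real_of_ereal (indicator A x))"
      by (rule continuous_on_eq) (simp add: indicator_def)
  qed
  show "\<not> quasicont M (indicator A)"
  proof
    assume qc: "quasicont M (indicator A)"
    then obtain E where E: "open E" "Cinf M E < ereal 1"
      "continuous_on (- E) (\<lambda>x. real_of_ereal (indicator A x))"
      using qc[unfolded quasicont_def, rule_format, OF zero_less_one] by blast
    have "Cinf M E < 1" using E(2) by (simp add: one_ereal_def)
    then have "E = {}" using E(1) lt1_open_empty by blast
    then have c: "continuous_on UNIV (\<lambda>x. real_of_ereal (indicator A x))" using E by simp
    have "open {x. (1/2::real) < real_of_ereal (indicator A x)}"
      by (rule open_Collect_less[OF _ c]) simp
    also have "{x. (1/2::real) < real_of_ereal (indicator A x)} = A"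
      by (auto simp: indicator_def)
    finally have "open A" .
    then have "0 < emeasure M A" using assms(1) mms_open_pos[OF mms] by blast
    then show False using null_setsD1[OF An] by simp
  qed
qed

lemma partIII:
  assumes "closed F" "interior F = {}" "outer_measure_of M F > 0"
  shows "indicator F \<in> N1inf M \<and> \<not> weakly_qc M (indicator F)"
proof (intro conjI)
  show "indicator F \<in> N1inf M" using ind_Linf[OF mms_closed[OF mms assms(1)]] by (simp add: N1_eq)
  show "\<not> weakly_qc M (indicator F)"
  proof
    assume qc: "weakly_qc M (indicator F)"
    obtain E where E: "Cinf M E < ereal 1"
      and c: "continuous_on (- E) (\<lambda>x. real_of_ereal (indicator F x))"
      using qc[unfolded weakly_qc_def, rule_format, OF zero_less_one] by blast
    have "Cinf M E < 1" using E by (simp add: one_ereal_def)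
    then have E0: "outer_measure_of M E = 0" by (rule Cinf_lt1)
    have "\<not> F \<subseteq> E"
    proof
      assume "F \<subseteq> E"
      then have "outer_measure_of M F \<le> outer_measure_of M E" by (rule outer_measure_of_mono)
      then show False using E0 assms(3) by simp
    qed
    then obtain x where x: "x \<in> F" "x \<notin> E" by auto
    have cx: "\<forall>e>0. \<exists>d>0. \<forall>y\<in>- E. dist y x < d \<longrightarrow>
        dist (real_of_ereal (indicator F y)) (real_of_ereal (indicator F x)) < e"
      using c x(2) unfolding continuous_on_iff by blast
    obtain d where d: "d > 0" and dd: "\<forall>y\<in>- E. dist y x < d \<longrightarrow>
        dist (real_of_ereal (indicator F y)) (real_of_ereal (indicator F x)) < 1"
      using cx[rule_format, OF zero_less_one] by blast
    have sub: "ball x d - E \<subseteq> F"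
    proof
      fix y assume y: "y \<in> ball x d - E"
      then have "dist (real_of_ereal (indicator F y)) (real_of_ereal (indicator F x)) < 1"
        using dd by (auto simp: dist_commute)
      then show "y \<in> F" using x by (cases "y \<in> F") (auto simp: indicator_def dist_real_def)
    qed
    have "\<not> ball x d \<subseteq> F"
    proof
      assume "ball x d \<subseteq> F"
      then have "ball x d \<subseteq> interior F" by (simp add: interior_maximal)
      then have "x \<in> interior F" using d by auto
      then show False using assms(2) by simp
    qed
    then obtain y where y: "y \<in> ball x d" "y \<notin> F" by blast
    let ?G = "ball x d - F"
    have oG: "open ?G" using assms(1) by auto
    have "?G \<subseteq> E" using sub by auto
    then have "outer_measure_of M ?G \<le> outer_measure_of M E" by (rule outer_measure_of_mono)
    moreover have "outer_measure_of M ?G > 0"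
      using mms_open_pos[OF mms oG, of y] y mms_open[OF mms oG] by simp
    ultimately show False using E0 by simp
  qed
qed


lemma sing_sets: "{x} \<in> sets M" using mms_closed[OF mms] by simp

lemma notP: assumes "\<not> (\<forall>x. emeasure M {x} > 0)" obtains x where "outer_measure_of M {x} = 0"
proof -
  from assms obtain x where "\<not> emeasure M {x} > 0" by blast
  then have "emeasure M {x} = 0" by (simp add: not_gr_zero)
  then show ?thesis using that sing_sets by simp
qed

lemma P_ne: assumes "\<forall>x. emeasure M {x} > 0" "E \<noteq> {}" shows "Cinf M E = 1"
proof -
  obtain x where x: "x \<in> E" using assms(2) by blast
  have "0 < outer_measure_of M {x}" using assms(1) sing_sets by simp
  also have "\<dots> \<le> outer_measure_of M E" using x by (intro outer_measure_of_mono) simp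
  finally show ?thesis by (rule Cinf_pos)
qed

lemma P_oc: assumes "\<forall>x. emeasure M {x} > 0" shows "outer_cap M"
  unfolding outer_cap_def quasiouter_c_def
proof
  fix E :: "'a set"
  show "(INF G \<in> {G. open G \<and> E \<subseteq> G}. Cinf M G) \<le> 1 * Cinf M E"
  proof (cases "E = {}")
    case True
    have "(INF G \<in> {G. open G \<and> E \<subseteq> G}. Cinf M G) \<le> Cinf M {}"
      by (rule INF_lower) (simp add: True)
    then show ?thesis using True Cinf_empty by simp
  next
    case False
    have "(INF G \<in> {G. open G \<and> E \<subseteq> G}. Cinf M G) \<le> Cinf M UNIV"
      by (rule INF_lower) simp
    also have "\<dots> \<le> 1" by (rule Cinf_le1)
    finally show ?thesis using P_ne[OF assms False] by simp
  qed
qed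

lemma oc_qo: "outer_cap M \<Longrightarrow> quasiouter M"
  unfolding outer_cap_def quasiouter_def by (intro exI[of _ 1]) (simp add: one_ereal_def)

lemma qo_P: assumes "quasiouter M" shows "\<forall>x. emeasure M {x} > 0"
proof (rule ccontr)
  assume "\<not> (\<forall>x. emeasure M {x} > 0)"
  then obtain x where x: "outer_measure_of M {x} = 0" by (rule notP)
  obtain c :: real where "quasiouter_c M (ereal c)" using assms unfolding quasiouter_def by blast
  then have "(INF G \<in> {G. open G \<and> {x} \<subseteq> G}. Cinf M G) \<le> ereal c * Cinf M {x}"
    unfolding quasiouter_c_def by blast
  also have "\<dots> = 0" using Cinf_null[OF x] by simp
  finally have le: "(INF G \<in> {G. open G \<and> {x} \<subseteq> G}. Cinf M G) \<le> 0" .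
  have "1 \<le> (INF G \<in> {G. open G \<and> {x} \<subseteq> G}. Cinf M G)"
  proof (intro INF_greatest)
    fix G assume "G \<in> {G. open G \<and> {x} \<subseteq> G}"
    then have "open G" "G \<noteq> {}" by auto
    then show "1 \<le> Cinf M G" using Cinf_open by simp
  qed
  then have "(1::ereal) \<le> 0" using le by (rule order.trans)
  then show False by simp
qed

lemma P_wq: assumes "\<forall>x. emeasure M {x} > 0" "weakly_qc M u" shows "quasicont M u"
  unfolding quasicont_def
proof (intro allI impI)
  fix e :: real assume e: "0 < e"
  obtain E where E: "Cinf M E < ereal e" "\<forall>x\<in>-E. \<bar>u x\<bar> \<noteq> \<infinity>"
    "continuous_on (-E) (\<lambda>x. real_of_ereal (u x))"
    using assms(2)[unfolded weakly_qc_def, rule_format, OF e] by blast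
  show "\<exists>E. open E \<and> Cinf M E < ereal e \<and> (\<forall>x\<in>-E. \<bar>u x\<bar> \<noteq> \<infinity>) \<and>
      continuous_on (-E) (\<lambda>x. real_of_ereal (u x))"
  proof (cases "E = {}")
    case True
    show ?thesis
    proof (intro exI[of _ E] conjI)
      show "open E" using True by simp
    qed (use E in simp_all)
  next
    case False
    have "Cinf M UNIV \<le> 1" by (rule Cinf_le1)
    also have "\<dots> = Cinf M E" using P_ne[OF assms(1) False] by simp
    finally have "Cinf M UNIV < ereal e" using E(1) by simp
    then show ?thesis by (intro exI[of _ UNIV]) simp
  qed
qed

lemma wq_P: assumes "\<forall>u. weakly_qc M u \<longrightarrow> quasicont M u" shows "\<forall>x. emeasure M {x} > 0"
proof (rule ccontr)
  assume "\<not> (\<forall>x. emeasure M {x} > 0)"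
  then obtain x where x: "outer_measure_of M {x} = 0" by (rule notP)
  have "weakly_qc M (indicator {x})" "\<not> quasicont M (indicator {x})"
    using partII[OF _ x] by simp_all
  then show False using assms by blast
qed

lemma P_oz: assumes "\<forall>x. emeasure M {x} > 0" shows "outer_zero_cap M"
  unfolding outer_zero_cap_def
proof (intro allI impI)
  fix E :: "'a set" and e :: real assume "Cinf M E = 0" "0 < e"
  have "E = {}"
  proof (rule ccontr)
    assume "E \<noteq> {}"
    then have "Cinf M E = 1" by (rule P_ne[OF assms])
    then show False using \<open>Cinf M E = 0\<close> by simp
  qed
  then show "\<exists>G. open G \<and> E \<subseteq> G \<and> Cinf M G < ereal e"
    using \<open>0 < e\<close> Cinf_empty by (intro exI[of _ "{}"]) simp
qed

lemma oz_P: assumes "outer_zero_cap M" shows "\<forall>x. emeasure M {x} > 0"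
proof (rule ccontr)
  assume "\<not> (\<forall>x. emeasure M {x} > 0)"
  then obtain x where x: "outer_measure_of M {x} = 0" by (rule notP)
  have "\<exists>G. open G \<and> {x} \<subseteq> G \<and> Cinf M G < ereal (1/2)"
    using assms[unfolded outer_zero_cap_def, rule_format, of "{x}" "1/2"] Cinf_null[OF x] by auto
  then obtain G where G: "open G" "x \<in> G" "Cinf M G < ereal (1/2)" by auto
  then have "Cinf M G = 1" using Cinf_open by blast
  then show False using G(3) by (simp add: one_ereal_def)
qed

lemma P_pos: "(\<forall>x. emeasure M {x} > 0) \<longleftrightarrow> (\<forall>E. E \<noteq> {} \<longrightarrow> Cinf M E > 0)"
proof
  assume "\<forall>x. emeasure M {x} > 0"
  then show "\<forall>E. E \<noteq> {} \<longrightarrow> Cinf M E > 0" using P_ne by simp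
next
  assume a: "\<forall>E. E \<noteq> {} \<longrightarrow> Cinf M E > 0"
  show "\<forall>x. emeasure M {x} > 0"
  proof (rule ccontr)
    assume "\<not> (\<forall>x. emeasure M {x} > 0)"
    then obtain x where x: "outer_measure_of M {x} = 0" by (rule notP)
    have "Cinf M {x} > 0" using a by blast
    then show False using Cinf_null[OF x] by simp
  qed
qed

end

theorem theorem6p2:
  fixes M :: "('a::metric_space) measure"
  assumes "mms M"
    and "all_curves_zero_modulus M"
  shows "N1inf M = Linf M
    \<and> (\<forall>E. (outer_measure_of M E = 0 \<longrightarrow> Cinf M E = 0) \<and> (outer_measure_of M E > 0 \<longrightarrow> Cinf M E = 1))
    \<and> (\<forall>A. A \<noteq> {} \<and> outer_measure_of M A = 0 \<longrightarrow>
         indicator A \<in> N1inf M \<and> weakly_qc M (indicator A) \<and> \<not> quasicont M (indicator A))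
    \<and> (\<forall>F. closed F \<and> interior F = {} \<and> outer_measure_of M F > 0 \<longrightarrow>
         indicator F \<in> N1inf M \<and> \<not> weakly_qc M (indicator F))
    \<and> ((\<forall>x. emeasure M {x} > 0) \<longleftrightarrow> outer_cap M)
    \<and> ((\<forall>x. emeasure M {x} > 0) \<longleftrightarrow> quasiouter M)
    \<and> ((\<forall>x. emeasure M {x} > 0) \<longleftrightarrow> (\<forall>u. weakly_qc M u \<longrightarrow> quasicont M u))
    \<and> ((\<forall>x. emeasure M {x} > 0) \<longleftrightarrow> outer_zero_cap M)
    \<and> ((\<forall>x. emeasure M {x} > 0) \<longleftrightarrow> (\<forall>E. E \<noteq> {} \<longrightarrow> Cinf M E > 0))"
proof -
  have f1: "N1inf M = Linf M" by (rule N1_eq[OF assms])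
  have f2: "\<forall>E. (outer_measure_of M E = 0 \<longrightarrow> Cinf M E = 0) \<and> (outer_measure_of M E > 0 \<longrightarrow> Cinf M E = 1)"
    using Cinf_null[OF assms] Cinf_pos[OF assms] by blast
  have f3: "\<forall>A. A \<noteq> {} \<and> outer_measure_of M A = 0 \<longrightarrow>
         indicator A \<in> N1inf M \<and> weakly_qc M (indicator A) \<and> \<not> quasicont M (indicator A)"
    using partII[OF assms] by blast
  have f4: "\<forall>F. closed F \<and> interior F = {} \<and> outer_measure_of M F > 0 \<longrightarrow>
         indicator F \<in> N1inf M \<and> \<not> weakly_qc M (indicator F)"
    using partIII[OF assms] by blast
  have f5: "(\<forall>x. emeasure M {x} > 0) \<longleftrightarrow> outer_cap M"
    using P_oc[OF assms] oc_qo[OF assms] qo_P[OF assms] by blast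
  have f6: "(\<forall>x. emeasure M {x} > 0) \<longleftrightarrow> quasiouter M"
    using P_oc[OF assms] oc_qo[OF assms] qo_P[OF assms] by blast
  have f7: "(\<forall>x. emeasure M {x} > 0) \<longleftrightarrow> (\<forall>u. weakly_qc M u \<longrightarrow> quasicont M u)"
    using P_wq[OF assms] wq_P[OF assms] by blast
  have f8: "(\<forall>x. emeasure M {x} > 0) \<longleftrightarrow> outer_zero_cap M"
    using P_oz[OF assms] oz_P[OF assms] by blast
  have f9: "(\<forall>x. emeasure M {x} > 0) \<longleftrightarrow> (\<forall>E. E \<noteq> {} \<longrightarrow> Cinf M E > 0)"
    by (rule P_pos[OF assms])
  show ?thesis by (intro conjI f1 f2 f3 f4 f5 f6 f7 f8 f9)
qed

end
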